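(* Fix one of the following settings: (i) real polynomials in one variable $x$, with "distinguished set" the point $x=1$; (ii) real polynomials in two variables $x,y$, with distinguished set the line $x+y=1$; (iii) real polynomials in three variables $x,y,z$, with distinguished set the plane $x+y+z=1$. Call a polynomial good if it equals $1$ on the distinguished set, has only non-negative coefficients, and has zero constant term. Let $f$ be a good polynomial and $a$ a positive integer. Then there are good polynomials $g$ and $h$ with $N(g)=aN(f)$ and $N(h)=aN(f)-(a-1)$. Moreover, if $f$ is invariant under a finite group $\Gamma$ of diagonal unitary matrices acting on the variables (e.g. $x\mapsto \eta x$; $(x,y)\mapsto(\eta x,\eta y)$; $(x,y)\mapsto(\eta x,\eta^2y)$; $(x,y,z)\mapsto(\eta x,\eta^2 y,\eta^4z)$ for a root of unity $\eta$), then $g$ and $h$ may be chosen $\Gamma$-invariant.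
   Context: $N(f)$ denotes the number of distinct monomials with nonzero coefficient in $f$. A polynomial $f$ is $\Gamma$-invariant if $f(\gamma\mathbf{x})=f(\mathbf{x})$ for all $\gamma\in\Gamma$. *)

theory Defs
  imports Complex_Main "HOL-Library.Poly_Mapping"
begin

type_synonym rpoly = "(nat \<Rightarrow>\<^sub>0 nat) \<Rightarrow>\<^sub>0 real"

definition peval :: "rpoly \<Rightarrow> (nat \<Rightarrow> 'a::real_field) \<Rightarrow> 'a" where
  "peval p x = (\<Sum>mo\<in>Poly_Mapping.keys p. of_real (Poly_Mapping.lookup p mo) * (\<Prod>v\<in>Poly_Mapping.keys mo. x v ^ Poly_Mapping.lookup mo v))"

definition nmon :: "rpoly \<Rightarrow> nat" where
  "nmon p = card (Poly_Mapping.keys p)"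

definition in_vars :: "nat \<Rightarrow> rpoly \<Rightarrow> bool" where
  "in_vars n p \<longleftrightarrow> (\<forall>m\<in>Poly_Mapping.keys p. Poly_Mapping.keys m \<subseteq> {..<n})"

definition good :: "nat \<Rightarrow> rpoly \<Rightarrow> bool" where
  "good n p \<longleftrightarrow> in_vars n p
     \<and> (\<forall>x::nat \<Rightarrow> real. (\<Sum>i<n. x i) = 1 \<longrightarrow> peval p x = 1)
     \<and> (\<forall>m. Poly_Mapping.lookup p m \<ge> 0)
     \<and> Poly_Mapping.lookup p 0 = 0"

text \<open>Finite groups of diagonal unitary n x n matrices, a matrix being given by its
  diagonal (entries at indices \<ge> n are normalized to 1).\<close>
definition diag_unitary_group :: "nat \<Rightarrow> (nat \<Rightarrow> complex) set \<Rightarrow> bool" where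
  "diag_unitary_group n G \<longleftrightarrow> finite G
     \<and> (\<forall>g\<in>G. (\<forall>i<n. cmod (g i) = 1) \<and> (\<forall>i\<ge>n. g i = 1))
     \<and> (\<lambda>i. 1) \<in> G
     \<and> (\<forall>g\<in>G. \<forall>h\<in>G. (\<lambda>i. g i * h i) \<in> G)
     \<and> (\<forall>g\<in>G. (\<lambda>i. inverse (g i)) \<in> G)"

definition invariant :: "(nat \<Rightarrow> complex) set \<Rightarrow> rpoly \<Rightarrow> bool" where
  "invariant G p \<longleftrightarrow> (\<forall>g\<in>G. \<forall>x::nat \<Rightarrow> complex. peval p (\<lambda>i. g i * x i) = peval p x)"

end

theory Submission imports Defs "HOL-Computational_Algebra.Polynomial" begin

definition mon :: "(nat \<Rightarrow>\<^sub>0 nat) \<Rightarrow> (nat \<Rightarrow> 'a::real_field) \<Rightarrow> 'a" where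
  "mon mo x = (\<Prod>v\<in>Poly_Mapping.keys mo. x v ^ Poly_Mapping.lookup mo v)"

lemma mon_superset:
  assumes "finite S" "Poly_Mapping.keys mo \<subseteq> S"
  shows "mon mo x = (\<Prod>v\<in>S. x v ^ Poly_Mapping.lookup mo v)"
  unfolding mon_def
  by (rule prod.mono_neutral_left) (use assms in \<open>auto simp: in_keys_iff\<close>)

lemma mon_add: "mon (a + b) x = mon a x * mon b x"
proof -
  let ?S = "Poly_Mapping.keys a \<union> Poly_Mapping.keys b"
  have "mon (a + b) x = (\<Prod>v\<in>?S. x v ^ Poly_Mapping.lookup (a+b) v)"
    by (intro mon_superset) (simp_all add: keys_add)
  also have "\<dots> = (\<Prod>v\<in>?S. x v ^ Poly_Mapping.lookup a v) * (\<Prod>v\<in>?S. x v ^ Poly_Mapping.lookup b v)"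
    by (simp add: lookup_add power_add prod.distrib)
  also have "\<dots> = mon a x * mon b x"
    by (subst (1 2) mon_superset[of ?S]) auto
  finally show ?thesis .
qed

lemma mon_zero[simp]: "mon 0 x = 1" by (simp add: mon_def)

lemma mon_mult: "mon mo (\<lambda>i. g i * x i) = mon mo g * mon mo x"
  by (simp add: mon_def power_mult_distrib prod.distrib)

definition deg :: "(nat \<Rightarrow>\<^sub>0 nat) \<Rightarrow> nat" where
  "deg mo = (\<Sum>v\<in>Poly_Mapping.keys mo. Poly_Mapping.lookup mo v)"

lemma deg_superset:
  assumes "finite S" "Poly_Mapping.keys mo \<subseteq> S"
  shows "deg mo = (\<Sum>v\<in>S. Poly_Mapping.lookup mo v)"
  unfolding deg_def
  by (rule sum.mono_neutral_left) (use assms in \<open>auto simp: in_keys_iff\<close>)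

lemma deg_add: "deg (a + b) = deg a + deg b"
proof -
  let ?S = "Poly_Mapping.keys a \<union> Poly_Mapping.keys b"
  have "deg (a + b) = (\<Sum>v\<in>?S. Poly_Mapping.lookup (a+b) v)"
    by (intro deg_superset) (simp_all add: keys_add)
  also have "\<dots> = (\<Sum>v\<in>?S. Poly_Mapping.lookup a v) + (\<Sum>v\<in>?S. Poly_Mapping.lookup b v)"
    by (simp add: lookup_add sum.distrib)
  also have "\<dots> = deg a + deg b"
    by (subst (1 2) deg_superset[of ?S]) auto
  finally show ?thesis .
qed

lemma deg_pos: "mo \<noteq> 0 \<Longrightarrow> deg mo \<ge> 1"
proof -
  assume "mo \<noteq> 0"
  then obtain v where v: "v \<in> Poly_Mapping.keys mo"
    by (metis all_not_in_conv keys_eq_empty)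
  then have "Poly_Mapping.lookup mo v \<le> deg mo" unfolding deg_def
    by (intro member_le_sum) auto
  with v show ?thesis by (simp add: in_keys_iff)
qed

lemma deg_zero[simp]: "deg 0 = 0" by (simp add: deg_def)

lemma peval_superset:
  assumes "finite S" "Poly_Mapping.keys p \<subseteq> S"
  shows "peval p x = (\<Sum>mo\<in>S. of_real (Poly_Mapping.lookup p mo) * mon mo x)"
  unfolding peval_def mon_def[symmetric]
  by (rule sum.mono_neutral_left) (use assms in \<open>auto simp: in_keys_iff\<close>)

lemma peval_add: "peval (p + q) x = peval p x + peval q x"
proof -
  let ?S = "Poly_Mapping.keys p \<union> Poly_Mapping.keys q"
  have "peval (p + q) x = (\<Sum>mo\<in>?S. of_real (Poly_Mapping.lookup (p+q) mo) * mon mo x)"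
    by (intro peval_superset) (simp_all add: keys_add)
  also have "\<dots> = (\<Sum>mo\<in>?S. of_real (Poly_Mapping.lookup p mo) * mon mo x) + (\<Sum>mo\<in>?S. of_real (Poly_Mapping.lookup q mo) * mon mo x)"
    by (simp add: lookup_add sum.distrib distrib_right)
  also have "\<dots> = peval p x + peval q x"
    by (subst (1 2) peval_superset[of ?S]) auto
  finally show ?thesis .
qed

lemma peval_diff: "peval (p - q) x = peval p x - peval q x"
proof -
  let ?S = "Poly_Mapping.keys p \<union> Poly_Mapping.keys q"
  have "peval (p - q) x = (\<Sum>mo\<in>?S. of_real (Poly_Mapping.lookup (p-q) mo) * mon mo x)"
    by (rule peval_superset) (auto simp: in_keys_iff lookup_minus)
  also have "\<dots> = (\<Sum>mo\<in>?S. of_real (Poly_Mapping.lookup p mo) * mon mo x) - (\<Sum>mo\<in>?S. of_real (Poly_Mapping.lookup q mo) * mon mo x)"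
    by (simp add: lookup_minus sum_subtractf left_diff_distrib)
  also have "\<dots> = peval p x - peval q x"
    by (subst (1 2) peval_superset[of ?S]) auto
  finally show ?thesis .
qed

lemma peval_single: "peval (Poly_Mapping.single s c) x = of_real c * mon s x"
  by (simp add: peval_def mon_def)

lemma lookup_single_mult:
  fixes s :: "nat \<Rightarrow>\<^sub>0 nat" and p :: rpoly
  shows "Poly_Mapping.lookup (Poly_Mapping.single s c * p) k = Sum_any (\<lambda>q. c * Poly_Mapping.lookup p q when k = s + q)"
  by (simp add: lookup_mult lookup_single when_mult mult_when Sum_any_right_distrib)


lemma lookup_single_mult_at:
  fixes s :: "nat \<Rightarrow>\<^sub>0 nat" and p :: rpoly
  shows "Poly_Mapping.lookup (Poly_Mapping.single s c * p) (s + k) = c * Poly_Mapping.lookup p k"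
  by (simp add: lookup_single_mult when_def)

lemma lookup_single_mult_notin:
  fixes s :: "nat \<Rightarrow>\<^sub>0 nat" and p :: rpoly
  shows "(\<forall>q. k \<noteq> s + q) \<Longrightarrow> Poly_Mapping.lookup (Poly_Mapping.single s c * p) k = 0"
  by (simp add: lookup_single_mult)

lemma keys_single_mult:
  fixes s :: "nat \<Rightarrow>\<^sub>0 nat" and p :: rpoly
  assumes "c \<noteq> 0"
  shows "Poly_Mapping.keys (Poly_Mapping.single s c * p) = (+) s ` Poly_Mapping.keys p"
proof
  show "Poly_Mapping.keys (Poly_Mapping.single s c * p) \<subseteq> (+) s ` Poly_Mapping.keys p"
  proof
    fix k assume k: "k \<in> Poly_Mapping.keys (Poly_Mapping.single s c * p)"
    then obtain q where q: "k = s + q"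
      using lookup_single_mult_notin[of k s c p] by (auto simp: in_keys_iff)
    with k show "k \<in> (+) s ` Poly_Mapping.keys p"
      by (auto simp: in_keys_iff lookup_single_mult_at intro!: imageI)
  qed
  show "(+) s ` Poly_Mapping.keys p \<subseteq> Poly_Mapping.keys (Poly_Mapping.single s c * p)"
    using assms by (auto simp: in_keys_iff lookup_single_mult_at)
qed

lemma peval_single_mult:
  fixes s :: "nat \<Rightarrow>\<^sub>0 nat" and p :: rpoly
  shows "peval (Poly_Mapping.single s c * p) x = of_real c * mon s x * peval p x"
proof (cases "c = 0")
  case True then show ?thesis by (simp add: peval_def)
next
  case False
  have inj: "inj_on ((+) s) (Poly_Mapping.keys p)" by (auto intro: inj_onI)
  have "peval (Poly_Mapping.single s c * p) x =
     (\<Sum>mo\<in>(+) s ` Poly_Mapping.keys p. of_real (Poly_Mapping.lookup (Poly_Mapping.single s c * p) mo) * mon mo x)"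
    by (rule peval_superset) (simp_all add: keys_single_mult[OF False])
  also have "\<dots> = (\<Sum>k\<in>Poly_Mapping.keys p. of_real (c * Poly_Mapping.lookup p k) * mon (s + k) x)"
    by (simp add: sum.reindex[OF inj] lookup_single_mult_at)
  also have "\<dots> = of_real c * mon s x * peval p x"
    by (simp add: peval_def mon_def[symmetric] mon_add sum_distrib_left mult_ac)
  finally show ?thesis .
qed


lemma digits_inj:
  fixes e e' :: "nat \<Rightarrow> nat"
  assumes "\<forall>u. e u < B" "\<forall>u. e' u < B" "(\<Sum>u<R. B^u * e u) = (\<Sum>u<R. B^u * e' u)"
  shows "\<forall>u<R. e u = e' u"
  using assms
proof (induction R arbitrary: e e')
  case 0 then show ?case by simp
next
  case (Suc R)
  have B: "B > 0" using Suc.prems(1) by (metis gr_zeroI not_less_zero)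
  have eq: "e 0 + B * (\<Sum>u<R. B^u * e (Suc u)) = e' 0 + B * (\<Sum>u<R. B^u * e' (Suc u))"
    using Suc.prems(3) by (simp add: sum.lessThan_Suc_shift sum_distrib_left mult_ac del: sum.lessThan_Suc)
  then have "(e 0 + B * (\<Sum>u<R. B^u * e (Suc u))) mod B = (e' 0 + B * (\<Sum>u<R. B^u * e' (Suc u))) mod B"
    by simp
  then have e0: "e 0 = e' 0" using Suc.prems(1,2) by simp
  with eq B have "(\<Sum>u<R. B^u * e (Suc u)) = (\<Sum>u<R. B^u * e' (Suc u))" by simp
  then have "\<forall>u<R. e (Suc u) = e' (Suc u)"
    using Suc.IH[of "\<lambda>u. e (Suc u)" "\<lambda>u. e' (Suc u)"] Suc.prems(1,2) by blast
  with e0 show ?case by (metis less_Suc_eq_0_disj)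
qed

definition wt :: "nat \<Rightarrow> (nat \<Rightarrow>\<^sub>0 nat) \<Rightarrow> nat" where
  "wt B mo = (\<Sum>v\<in>Poly_Mapping.keys mo. B^v * Poly_Mapping.lookup mo v)"

lemma mon_pow: "mon mo (\<lambda>v. t ^ (B ^ v)) = t ^ wt B mo"
  by (simp add: mon_def wt_def power_sum power_mult[symmetric])

lemma wt_inj:
  assumes "Poly_Mapping.keys a \<subseteq> {..<R}" "Poly_Mapping.keys b \<subseteq> {..<R}"
    "\<forall>v. Poly_Mapping.lookup a v < B" "\<forall>v. Poly_Mapping.lookup b v < B" "wt B a = wt B b"
  shows "a = b"
proof -
  have wa: "wt B a = (\<Sum>u<R. B^u * Poly_Mapping.lookup a u)" unfolding wt_def
    by (rule sum.mono_neutral_left) (use assms in \<open>auto simp: in_keys_iff\<close>)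
  have wb: "wt B b = (\<Sum>u<R. B^u * Poly_Mapping.lookup b u)" unfolding wt_def
    by (rule sum.mono_neutral_left) (use assms in \<open>auto simp: in_keys_iff\<close>)
  have "\<forall>u<R. Poly_Mapping.lookup a u = Poly_Mapping.lookup b u"
    by (rule digits_inj[of _ B _ R]) (use assms wa wb in auto)
  moreover have "\<forall>u. u \<ge> R \<longrightarrow> Poly_Mapping.lookup a u = 0 \<and> Poly_Mapping.lookup b u = 0"
    using assms(1,2) by (auto simp: not_in_keys_iff_lookup_eq_zero[symmetric])
  ultimately show ?thesis
    by (metis leI poly_mapping_eqI)
qed

lemma coeff_vanish:
  fixes S :: "(nat \<Rightarrow>\<^sub>0 nat) set" and d :: "(nat \<Rightarrow>\<^sub>0 nat) \<Rightarrow> complex"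
  assumes fin: "finite S" and van: "\<forall>x::nat \<Rightarrow> complex. (\<Sum>mo\<in>S. d mo * mon mo x) = 0"
    and m0: "m0 \<in> S"
  shows "d m0 = 0"
proof -
  obtain R where R: "(\<Union>mo\<in>S. Poly_Mapping.keys mo) \<subseteq> {..<R}"
    using finite_nat_bounded[of "\<Union>mo\<in>S. Poly_Mapping.keys mo"] fin by auto
  have "finite {Poly_Mapping.lookup mo v | mo v. mo \<in> S \<and> v \<in> Poly_Mapping.keys mo}"
  proof -
    have "{Poly_Mapping.lookup mo v | mo v. mo \<in> S \<and> v \<in> Poly_Mapping.keys mo}
      = (\<Union>mo\<in>S. Poly_Mapping.lookup mo ` Poly_Mapping.keys mo)" by auto
    then show ?thesis using fin by simp
  qed
  then obtain B0 where B0: "{Poly_Mapping.lookup mo v | mo v. mo \<in> S \<and> v \<in> Poly_Mapping.keys mo} \<subseteq> {..<B0}"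
    using finite_nat_bounded by blast
  define B where "B = Suc B0"
  have Bb: "\<forall>v. Poly_Mapping.lookup mo v < B" if "mo \<in> S" for mo
  proof
    fix v show "Poly_Mapping.lookup mo v < B"
    proof (cases "v \<in> Poly_Mapping.keys mo")
      case True
      then have "Poly_Mapping.lookup mo v \<in> {..<B0}" using B0 that by blast
      then show ?thesis unfolding B_def by simp
    next
      case False then show ?thesis unfolding B_def by (simp add: in_keys_iff)
    qed
  qed
  define Q where "Q = (\<Sum>mo\<in>S. monom (d mo) (wt B mo))"
  have "poly Q t = 0" for t
  proof -
    have "poly Q t = (\<Sum>mo\<in>S. d mo * mon mo (\<lambda>v. t ^ (B ^ v)))"
      by (simp add: Q_def poly_sum poly_monom mon_pow)
    also have "\<dots> = 0" using van by blast
    finally show ?thesis .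
  qed
  then have "Q = 0" using poly_all_0_iff_0 by blast
  then have "0 = coeff Q (wt B m0)" by simp
  also have "\<dots> = (\<Sum>mo\<in>S. if mo = m0 then d mo else 0)"
    unfolding Q_def coeff_sum coeff_monom
  proof (rule sum.cong)
    fix mo assume mo: "mo \<in> S"
    have "wt B mo = wt B m0 \<longleftrightarrow> mo = m0"
      using wt_inj[of mo R m0 B] R Bb[OF mo] Bb[OF m0] mo m0 by blast
    then show "(if wt B mo = wt B m0 then d mo else 0) = (if mo = m0 then d mo else 0)" by simp
  qed simp
  also have "\<dots> = d m0" using m0 fin by simp
  finally show ?thesis by simp
qed


lemma invariant_mon:
  assumes inv: "invariant G f" and mo: "mo \<in> Poly_Mapping.keys f" and g: "g \<in> G"
  shows "mon mo g = 1"
proof -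
  define d where "d mo = complex_of_real (Poly_Mapping.lookup f mo) * (mon mo g - 1)" for mo
  have "\<forall>x::nat \<Rightarrow> complex. (\<Sum>mo\<in>Poly_Mapping.keys f. d mo * mon mo x) = 0"
  proof
    fix x :: "nat \<Rightarrow> complex"
    have "peval f (\<lambda>i. g i * x i) = peval f x" using inv g unfolding invariant_def by blast
    then have "(\<Sum>mo\<in>Poly_Mapping.keys f. of_real (Poly_Mapping.lookup f mo) * (mon mo g * mon mo x))
       - (\<Sum>mo\<in>Poly_Mapping.keys f. of_real (Poly_Mapping.lookup f mo) * mon mo x) = 0"
      by (simp add: peval_def mon_def[symmetric] mon_mult)
    then show "(\<Sum>mo\<in>Poly_Mapping.keys f. d mo * mon mo x) = 0"
      by (simp add: d_def sum_subtractf[symmetric] algebra_simps)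
  qed
  then have "d mo = 0" using coeff_vanish[of "Poly_Mapping.keys f" d mo] mo by simp
  moreover have "Poly_Mapping.lookup f mo \<noteq> 0" using mo by (simp add: in_keys_iff)
  ultimately show ?thesis by (simp add: d_def)
qed

primrec iter :: "rpoly \<Rightarrow> rpoly \<Rightarrow> nat \<Rightarrow> rpoly" where
  "iter f M 0 = f"
| "iter f M (Suc k) = (f - M) + M * iter f M k"

lemma iter_peval_Suc:
  "peval (iter f (Poly_Mapping.single m l) (Suc k)) x =
    peval f x - of_real l * mon m x + of_real l * mon m x * peval (iter f (Poly_Mapping.single m l) k) x"
  by (simp add: peval_add peval_diff peval_single peval_single_mult)

lemma iter_peval_one:
  "peval f x = 1 \<Longrightarrow> peval (iter f (Poly_Mapping.single m l) k) x = 1"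
  by (induction k) (simp_all add: iter_peval_Suc del: iter.simps(2))

lemma iter_invariant:
  assumes "\<And>x. peval f (\<lambda>i. g i * x i) = peval f x" "\<And>x. mon m (\<lambda>i. g i * x i) = mon m x"
  shows "peval (iter f (Poly_Mapping.single m l) k) (\<lambda>i. g i * x i) = peval (iter f (Poly_Mapping.single m l) k) x"
  by (induction k) (simp_all add: iter_peval_Suc assms del: iter.simps(2))

lemma keys_add_disjoint:
  fixes p q :: rpoly
  assumes "Poly_Mapping.keys p \<inter> Poly_Mapping.keys q = {}"
  shows "Poly_Mapping.keys (p + q) = Poly_Mapping.keys p \<union> Poly_Mapping.keys q"
proof
  show "Poly_Mapping.keys (p + q) \<subseteq> Poly_Mapping.keys p \<union> Poly_Mapping.keys q" by (rule keys_add)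
  show "Poly_Mapping.keys p \<union> Poly_Mapping.keys q \<subseteq> Poly_Mapping.keys (p + q)"
  proof
    fix k assume k: "k \<in> Poly_Mapping.keys p \<union> Poly_Mapping.keys q"
    then consider "k \<in> Poly_Mapping.keys p" "k \<notin> Poly_Mapping.keys q" | "k \<in> Poly_Mapping.keys q" "k \<notin> Poly_Mapping.keys p"
      using assms by blast
    then show "k \<in> Poly_Mapping.keys (p + q)"
      by cases (simp_all add: in_keys_iff lookup_add)
  qed
qed


lemma iter_struct:
  fixes f :: rpoly
  assumes vars: "in_vars n f" and nonneg: "\<forall>K. Poly_Mapping.lookup f K \<ge> 0"
    and z: "Poly_Mapping.lookup f 0 = 0"
    and m: "m \<in> Poly_Mapping.keys f" and mx: "\<forall>K\<in>Poly_Mapping.keys f. deg K \<le> deg m"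
    and l: "0 < l" "l \<le> Poly_Mapping.lookup f m"
  shows "(\<forall>K\<in>Poly_Mapping.keys (iter f (Poly_Mapping.single m l) k). 1 \<le> deg K \<and> deg K \<le> Suc k * deg m)
     \<and> (\<forall>K. Poly_Mapping.lookup (iter f (Poly_Mapping.single m l) k) K \<ge> 0)
     \<and> in_vars n (iter f (Poly_Mapping.single m l) k)
     \<and> card (Poly_Mapping.keys (iter f (Poly_Mapping.single m l) k))
        = card (Poly_Mapping.keys f) + k * card (Poly_Mapping.keys (f - Poly_Mapping.single m l))"
proof (induction k)
  let ?M = "Poly_Mapping.single m l"
  have kf: "1 \<le> deg K" if "K \<in> Poly_Mapping.keys f" for K
  proof -
    have "K \<noteq> 0" using that z by (auto simp: in_keys_iff)
    then show ?thesis by (rule deg_pos)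
  qed
  case 0
  show ?case using kf mx vars nonneg by auto
next
  let ?M = "Poly_Mapping.single m l"
  let ?D = "deg m"
  case (Suc k)
  define P where "P = iter f ?M k"
  have kf: "1 \<le> deg K" if "K \<in> Poly_Mapping.keys f" for K
  proof -
    have "K \<noteq> 0" using that z by (auto simp: in_keys_iff)
    then show ?thesis by (rule deg_pos)
  qed
  have lfm: "Poly_Mapping.lookup (f - ?M) K = Poly_Mapping.lookup f K - (if K = m then l else 0)" for K
    by (auto simp: lookup_minus lookup_single when_def)
  have kfm: "Poly_Mapping.keys (f - ?M) \<subseteq> Poly_Mapping.keys f"
    using m by (auto simp: in_keys_iff lfm split: if_splits)
  have nfm: "Poly_Mapping.lookup (f - ?M) K \<ge> 0" for K
    using nonneg l by (simp add: lfm)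
  have kMP: "Poly_Mapping.keys (?M * P) = (+) m ` Poly_Mapping.keys P"
    using l by (intro keys_single_mult) simp
  have IH: "\<forall>K\<in>Poly_Mapping.keys P. 1 \<le> deg K \<and> deg K \<le> Suc k * ?D"
    "\<forall>K. Poly_Mapping.lookup P K \<ge> 0" "in_vars n P"
    "card (Poly_Mapping.keys P) = card (Poly_Mapping.keys f) + k * card (Poly_Mapping.keys (f - ?M))"
    using Suc.IH unfolding P_def by auto
  have disj: "Poly_Mapping.keys (f - ?M) \<inter> Poly_Mapping.keys (?M * P) = {}"
  proof -
    { fix K assume K1: "K \<in> Poly_Mapping.keys (f - ?M)" and K2: "K \<in> Poly_Mapping.keys (?M * P)"
      then obtain K' where K': "K = m + K'" "K' \<in> Poly_Mapping.keys P" using kMP by auto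
      then have "deg K = ?D + deg K'" by (simp add: deg_add)
      moreover have "deg K' \<ge> 1" using IH(1) K' by auto
      moreover have "deg K \<le> ?D" using K1 kfm mx by auto
      ultimately have False by simp }
    then show ?thesis by blast
  qed
  have keq: "Poly_Mapping.keys (iter f ?M (Suc k)) = Poly_Mapping.keys (f - ?M) \<union> (+) m ` Poly_Mapping.keys P"
    using keys_add_disjoint[OF disj] kMP by (simp add: P_def)
  have A: "\<forall>K\<in>Poly_Mapping.keys (iter f ?M (Suc k)). 1 \<le> deg K \<and> deg K \<le> Suc (Suc k) * ?D"
  proof
    fix K assume "K \<in> Poly_Mapping.keys (iter f ?M (Suc k))"
    then consider "K \<in> Poly_Mapping.keys (f - ?M)" | K' where "K = m + K'" "K' \<in> Poly_Mapping.keys P"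
      using keq by auto
    then show "1 \<le> deg K \<and> deg K \<le> Suc (Suc k) * ?D"
    proof cases
      case 1
      then have "K \<in> Poly_Mapping.keys f" using kfm by blast
      then have "1 \<le> deg K" "deg K \<le> ?D" using kf mx by auto
      moreover have "?D \<le> Suc (Suc k) * ?D" by simp
      ultimately show ?thesis by linarith
    next
      case 2 then show ?thesis using IH(1) by (auto simp: deg_add)
    qed
  qed
  have B: "\<forall>K. Poly_Mapping.lookup (iter f ?M (Suc k)) K \<ge> 0"
  proof
    fix K
    have "Poly_Mapping.lookup (?M * P) K \<ge> 0"
    proof (cases "\<exists>q. K = m + q")
      case True then obtain q where "K = m + q" by blast
      then show ?thesis using l IH(2) by (simp add: lookup_single_mult_at)
    next
      case False then show ?thesis by (simp add: lookup_single_mult_notin)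
    qed
    then show "Poly_Mapping.lookup (iter f ?M (Suc k)) K \<ge> 0"
      using nfm[of K] by (simp add: lookup_add P_def)
  qed
  have C: "in_vars n (iter f ?M (Suc k))"
    unfolding in_vars_def
  proof
    fix K assume "K \<in> Poly_Mapping.keys (iter f ?M (Suc k))"
    then consider "K \<in> Poly_Mapping.keys (f - ?M)" | K' where "K = m + K'" "K' \<in> Poly_Mapping.keys P"
      using keq by auto
    then show "Poly_Mapping.keys K \<subseteq> {..<n}"
    proof cases
      case 1 then show ?thesis using kfm vars unfolding in_vars_def by auto
    next
      case 2
      have "Poly_Mapping.keys m \<subseteq> {..<n}" "Poly_Mapping.keys K' \<subseteq> {..<n}"
        using vars IH(3) m 2(2) unfolding in_vars_def by auto
      then show ?thesis using 2(1) keys_add[of m K'] by auto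
    qed
  qed
  have inj: "inj_on ((+) m) (Poly_Mapping.keys P)" by (auto intro: inj_onI)
  have D: "card (Poly_Mapping.keys (iter f ?M (Suc k))) = card (Poly_Mapping.keys f) + Suc k * card (Poly_Mapping.keys (f - ?M))"
  proof -
    have d2: "Poly_Mapping.keys (f - ?M) \<inter> (+) m ` Poly_Mapping.keys P = {}" using disj kMP by simp
    have "card (Poly_Mapping.keys (iter f ?M (Suc k))) = card (Poly_Mapping.keys (f - ?M)) + card ((+) m ` Poly_Mapping.keys P)"
      unfolding keq by (rule card_Un_disjoint) (use d2 in auto)
    also have "\<dots> = card (Poly_Mapping.keys (f - ?M)) + card (Poly_Mapping.keys P)"
      using card_image[OF inj] by simp
    finally show ?thesis using IH(4) by simp
  qed
  show ?case using A B C D by blast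
qed


theorem proposition2p2:
  fixes n a :: nat and f :: rpoly
  assumes "n \<in> {1, 2, 3}"
    and "good n f"
    and "a > 0"
  shows "(\<exists>g h. good n g \<and> good n h \<and> nmon g = a * nmon f \<and> nmon h = a * nmon f - (a - 1))
    \<and> (\<forall>G. diag_unitary_group n G \<and> invariant G f \<longrightarrow>
          (\<exists>g h. good n g \<and> good n h \<and> nmon g = a * nmon f \<and> nmon h = a * nmon f - (a - 1)
                 \<and> invariant G g \<and> invariant G h))"
proof -
  have n1: "n \<ge> 1" using assms(1) by auto
  have vars: "in_vars n f" and hyp: "\<forall>x::nat \<Rightarrow> real. (\<Sum>i<n. x i) = 1 \<longrightarrow> peval f x = 1"
    and nonneg: "\<forall>m. Poly_Mapping.lookup f m \<ge> 0" and z: "Poly_Mapping.lookup f 0 = 0"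
    using assms(2) unfolding good_def by auto
  define x0 :: "nat \<Rightarrow> real" where "x0 = (\<lambda>i. if i = 0 then 1 else 0)"
  have "(\<Sum>i<n. x0 i) = 1" using n1 by (simp add: x0_def)
  then have "peval f x0 = 1" using hyp by blast
  then have ne: "Poly_Mapping.keys f \<noteq> {}" by (auto simp: peval_def)
  obtain m where m: "m \<in> Poly_Mapping.keys f" "deg m = Max (deg ` Poly_Mapping.keys f)"
  proof -
    have "Max (deg ` Poly_Mapping.keys f) \<in> deg ` Poly_Mapping.keys f"
      by (rule Max_in) (use ne in simp_all)
    then show ?thesis using that by auto
  qed
  have mx: "\<forall>K\<in>Poly_Mapping.keys f. deg K \<le> deg m" using m(2) by simp
  define c where "c = Poly_Mapping.lookup f m"
  have c: "c > 0" using m(1) nonneg unfolding c_def by (metis in_keys_iff order_le_less)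
  define N where "N = nmon f"
  have N1: "N \<ge> 1" using ne unfolding N_def nmon_def by (simp add: Suc_le_eq card_gt_0_iff)
  have lfm: "Poly_Mapping.lookup (f - Poly_Mapping.single m l) K = Poly_Mapping.lookup f K - (if K = m then l else 0)" for K l
    by (auto simp: lookup_minus lookup_single when_def)
  have k1: "Poly_Mapping.keys (f - Poly_Mapping.single m (c/2)) = Poly_Mapping.keys f"
    using c by (auto simp: in_keys_iff lfm c_def split: if_splits)
  have k2: "Poly_Mapping.keys (f - Poly_Mapping.single m c) = Poly_Mapping.keys f - {m}"
    by (auto simp: in_keys_iff lfm c_def split: if_splits)
  have card2: "card (Poly_Mapping.keys (f - Poly_Mapping.single m c)) = N - 1"
    unfolding k2 N_def nmon_def using m(1) by simp
  have card1: "card (Poly_Mapping.keys (f - Poly_Mapping.single m (c/2))) = N"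
    unfolding k1 N_def nmon_def by simp
  have goodP: "good n (iter f (Poly_Mapping.single m l) k)
      \<and> nmon (iter f (Poly_Mapping.single m l) k) = N + k * card (Poly_Mapping.keys (f - Poly_Mapping.single m l))"
    if l: "0 < l" "l \<le> c" for l k
  proof -
    note S = iter_struct[OF vars nonneg z m(1) mx l(1) l(2)[unfolded c_def], of k]
    have "0 \<notin> Poly_Mapping.keys (iter f (Poly_Mapping.single m l) k)" using S by fastforce
    then have "Poly_Mapping.lookup (iter f (Poly_Mapping.single m l) k) 0 = 0" by (simp add: in_keys_iff)
    then show ?thesis using S hyp iter_peval_one unfolding good_def nmon_def N_def by blast
  qed
  have invP: "invariant G (iter f (Poly_Mapping.single m l) k)" if "invariant G f" for G l k
    unfolding invariant_def
  proof (intro ballI allI)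
    fix g :: "nat \<Rightarrow> complex" and x assume g: "g \<in> G"
    have "mon m g = 1" using invariant_mon[OF that m(1) g] .
    then have "mon m (\<lambda>i. g i * x i) = mon m x" for x by (simp add: mon_mult)
    moreover have "peval f (\<lambda>i. g i * x i) = peval f x" for x using that g unfolding invariant_def by blast
    ultimately show "peval (iter f (Poly_Mapping.single m l) k) (\<lambda>i. g i * x i) = peval (iter f (Poly_Mapping.single m l) k) x"
      by (intro iter_invariant)
  qed
  define g where "g = iter f (Poly_Mapping.single m (c/2)) (a - 1)"
  define h where "h = iter f (Poly_Mapping.single m c) (a - 1)"
  have G: "good n g" "nmon g = a * nmon f"
    using goodP[of "c/2" "a - 1"] c card1 assms(3) unfolding g_def N_def
    by (auto simp: algebra_simps)
  have H: "good n h" "nmon h = a * nmon f - (a - 1)"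
  proof -
    have "good n h \<and> nmon h = N + (a - 1) * (N - 1)"
      using goodP[of c "a - 1"] c card2 unfolding h_def by auto
    moreover have "N + (a - 1) * (N - 1) = a * N - (a - 1)"
    proof -
      obtain a' where a': "a = Suc a'" using assms(3) by (cases a) auto
      obtain N' where N': "N = Suc N'" using N1 by (cases N) auto
      show ?thesis unfolding a' N' by (simp add: algebra_simps)
    qed
    ultimately show "good n h" "nmon h = a * nmon f - (a - 1)" unfolding N_def by auto
  qed
  show ?thesis
  proof (intro conjI allI impI)
    show "\<exists>g h. good n g \<and> good n h \<and> nmon g = a * nmon f \<and> nmon h = a * nmon f - (a - 1)"
      using G H by blast
    fix G' assume "diag_unitary_group n G' \<and> invariant G' f"
    then have "invariant G' g" "invariant G' h" unfolding g_def h_def using invP by auto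
    then show "\<exists>g h. good n g \<and> good n h \<and> nmon g = a * nmon f \<and> nmon h = a * nmon f - (a - 1)
                 \<and> invariant G' g \<and> invariant G' h"
      using G H by blast
  qed
qed

end
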